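(* Let $q$ be a power of $2$ and $n\ge1$ an integer with $\gcd(n+1,q)=1$. If $q>n/2$, then there exists $a\in\mathbb{F}_q$ such that $C_n(a)$ is LCD.
   Context: For $a\in\mathbb{F}_q$ and $n \ge 1$, $T_n(a)$ denotes the $n\times n$ symmetric tridiagonal Toeplitz matrix over $\mathbb{F}_q$ with all diagonal entries equal to $a$, all entries on the first super- and sub-diagonals equal to $1$, and all other entries $0$. $C_n(a)$ is the $[2n,n]$ linear code over $\mathbb{F}_q$ with generator matrix $[I_n \mid T_n(a)]$. A linear code $C$ is LCD if $C\cap C^\perp=\{0\}$ (Euclidean dual). *)

theory Defs
  imports Complex_Main
begin

text \<open>Vectors of length N over a field are modelled as functions nat => 'a
  that vanish at all indices >= N; matrices as functions nat => nat => 'a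
  (only entries with indices below the dimension matter).\<close>

definition tridiag :: "nat \<Rightarrow> 'a::field \<Rightarrow> nat \<Rightarrow> nat \<Rightarrow> 'a" where
  "tridiag n a i j = (if i < n \<and> j < n then
       (if i = j then a else if i = j + 1 \<or> j = i + 1 then 1 else 0) else 0)"

definition gen_matrix :: "nat \<Rightarrow> 'a::field \<Rightarrow> nat \<Rightarrow> nat \<Rightarrow> 'a" where
  "gen_matrix n a i j = (if j < n then (if i = j then 1 else 0) else tridiag n a i (j - n))"

definition code_gen :: "nat \<Rightarrow> nat \<Rightarrow> (nat \<Rightarrow> nat \<Rightarrow> 'a::field) \<Rightarrow> (nat \<Rightarrow> 'a) set" where
  "code_gen k N G = {c. \<exists>m::nat \<Rightarrow> 'a. c = (\<lambda>j. if j < N then (\<Sum>i<k. m i * G i j) else 0)}"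

definition C_code :: "nat \<Rightarrow> 'a::field \<Rightarrow> (nat \<Rightarrow> 'a) set" where
  "C_code n a = code_gen n (2 * n) (gen_matrix n a)"

definition dual_code :: "nat \<Rightarrow> (nat \<Rightarrow> 'a::field) set \<Rightarrow> (nat \<Rightarrow> 'a) set" where
  "dual_code N C = {v. (\<forall>j\<ge>N. v j = 0) \<and> (\<forall>c\<in>C. (\<Sum>j<N. v j * c j) = 0)}"

definition is_LCD :: "nat \<Rightarrow> (nat \<Rightarrow> 'a::field) set \<Rightarrow> bool" where
  "is_LCD N C \<longleftrightarrow> C \<inter> dual_code N C = {(\<lambda>_. 0)}"

end

theory Submission
  imports Defs "HOL-Number_Theory.Residues"
begin

definition off :: "nat \<Rightarrow> (nat \<Rightarrow> 'a::field) \<Rightarrow> nat \<Rightarrow> 'a" where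
  "off n v j = (if 0 < j then v (j - 1) else 0) + (if j + 1 < n then v (j + 1) else 0)"

lemma char2:
  assumes "\<exists>k::nat. card (UNIV :: 'a set) = 2 ^ k"
  shows "(1::'a::{finite,field}) + 1 = 0"
proof -
  obtain k where k: "card (UNIV :: 'a set) = 2 ^ k" using assms by blast
  have pos: "CHAR('a) > 0" by (rule finite_imp_CHAR_pos) simp
  have pr: "prime CHAR('a)" using prime_CHAR_semidom[OF pos] .
  have "CHAR('a) dvd 2 ^ k" using CHAR_dvd_CARD[where 'a='a] k by simp
  hence "CHAR('a) dvd 2" using pr prime_dvd_power by blast
  hence "CHAR('a) = 2" using pr
    using primes_dvd_imp_eq two_is_prime_nat by blast
  hence "of_nat 2 = (0::'a)" by (metis of_nat_CHAR)
  thus ?thesis by simp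
qed

lemma kill:
  fixes v :: "nat \<Rightarrow> 'a::field"
  assumes ev: "even n"
    and h: "\<And>j. j < n \<Longrightarrow> off n v j = 0"
    and i: "i < n"
  shows "v i = 0"
proof -
  have odd: "\<forall>k. 2*k+1 < n \<longrightarrow> v (2*k+1) = 0"
  proof
    fix k show "2*k+1 < n \<longrightarrow> v (2*k+1) = 0"
    proof (induction k)
      case 0
      show ?case using h[of 0] by (auto simp: off_def)
    next
      case (Suc k)
      show ?case
      proof
        assume a: "2 * Suc k + 1 < n"
        have "off n v (2*k+2) = 0" using h a by simp
        hence e: "v (2*k+1) + v (2*k+3) = 0" using a by (simp add: off_def numeral_3_eq_3)
        have "v (2*k+1) = 0" using Suc.IH a by simp
        hence "v (2*k+3) = 0" using e by simp
        moreover have "2*k+3 = 2 * Suc k + 1" by simp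
        ultimately show "v (2 * Suc k + 1) = 0" by simp
      qed
    qed
  qed
  have evn: "\<forall>d. 2*d+2 \<le> n \<longrightarrow> v (n-2-2*d) = 0"
  proof
    fix d show "2*d+2 \<le> n \<longrightarrow> v (n-2-2*d) = 0"
    proof (induction d)
      case 0
      show ?case
      proof
        assume a: "2*0+2 \<le> n"
        have "off n v (n-1) = 0" using h a by simp
        moreover have "n - 1 - 1 = n - 2" by simp
        ultimately show "v (n-2-2*0) = 0" using a by (simp add: off_def)
      qed
    next
      case (Suc d)
      show ?case
      proof
        assume a: "2 * Suc d + 2 \<le> n"
        have "off n v (n-3-2*d) = 0" using h a by simp
        moreover have "n-3-2*d - 1 = n - 2 - 2 * Suc d" using a by simp
        moreover have "n-3-2*d + 1 = n - 2 - 2*d" using a by simp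
        moreover have "0 < n-3-2*d" "n-3-2*d+1 < n" using a by auto
        ultimately have "v (n - 2 - 2 * Suc d) + v (n-2-2*d) = 0"
          by (simp add: off_def)
        thus "v (n - 2 - 2 * Suc d) = 0" using Suc a by simp
      qed
    qed
  qed
  show ?thesis
  proof (cases "even i")
    case True
    define d where "d = (n - 2 - i) div 2"
    have "2*d+2 \<le> n" "n-2-2*d = i" using True ev i unfolding d_def by (auto elim!: evenE)
    thus ?thesis using evn by metis
  next
    case False
    then obtain k where "i = 2*k+1" by (metis oddE)
    thus ?thesis using odd i by auto
  qed
qed

lemma sum_split: fixes m :: nat shows "(\<Sum>j<n+m. f j) = (\<Sum>j<n. f j) + (\<Sum>j<m. f (n+j))"
  by (induction m) (auto simp: add_ac)

lemma tri_sum: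
  fixes m :: "nat \<Rightarrow> 'a::field"
  assumes "j < n"
  shows "(\<Sum>i<n. m i * tridiag n b i j) = b * m j + off n m j"
proof -
  have "(\<Sum>i<n. m i * tridiag n b i j) =
     (\<Sum>i<n. (if i = j then b * m i else 0) + (if i = j + 1 then m i else 0)
        + (if i + 1 = j then m i else 0))"
    using assms by (intro sum.cong) (auto simp: tridiag_def)
  also have "\<dots> = b * m j + (if j + 1 < n then m (j+1) else 0)
      + (\<Sum>i<n. if i = j - 1 \<and> 0 < j then m i else 0)"
    using assms by (simp add: sum.distrib) (intro sum.cong, auto)
  also have "(\<Sum>i<n. if i = j - 1 \<and> 0 < j then m i else 0) = (if 0 < j then m (j-1) else 0)"
    using assms by (cases "0 < j") (simp_all add: sum.delta)
  finally show ?thesis by (simp add: off_def add_ac)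
qed

theorem corollary2p1:
  fixes n :: nat
  assumes q_pow2: "\<exists>k::nat. card (UNIV :: 'a set) = 2 ^ k"
    and n_pos: "n \<ge> 1"
    and coprime: "gcd (n + 1) (card (UNIV :: 'a set)) = 1"
    and q_big: "real (card (UNIV :: 'a set)) > real n / 2"
  shows "\<exists>a::'a::{finite,field}. is_LCD (2 * n) (C_code n a)"
proof -
  have c2: "(1::'a) + 1 = 0" using char2[OF q_pow2] .
  have xx: "\<And>x::'a. x + x = 0" by (metis c2 distrib_right mult_1 mult_zero_left)
  have evn: "even n"
  proof -
    obtain k where k: "card (UNIV :: 'a set) = 2 ^ k" using q_pow2 by blast
    have "card (UNIV :: 'a set) \<ge> 2"
    proof -
      have "{0::'a, 1} \<subseteq> UNIV" by simp
      hence "card {0::'a,1} \<le> card (UNIV::'a set)" by (intro card_mono) auto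
      thus ?thesis by simp
    qed
    hence "k \<noteq> 0" using k by (cases k) auto
    hence "2 dvd card (UNIV :: 'a set)" using k by simp
    hence "odd (n+1)" using coprime
      by (metis gcd_greatest odd_one)
    thus ?thesis by simp
  qed
  have "is_LCD (2 * n) (C_code n (1::'a))"
    unfolding is_LCD_def
  proof
    show "{\<lambda>_. 0} \<subseteq> C_code n (1::'a) \<inter> dual_code (2 * n) (C_code n (1::'a))"
      unfolding C_code_def code_gen_def dual_code_def
      by (auto intro!: exI[of _ "\<lambda>_. 0"])
  next
    show "C_code n (1::'a) \<inter> dual_code (2 * n) (C_code n (1::'a)) \<subseteq> {\<lambda>_. 0}"
    proof
      fix c assume cin: "c \<in> C_code n 1 \<inter> dual_code (2 * n) (C_code n (1::'a))"
      then obtain m where cdef: "c = (\<lambda>j. if j < 2*n then (\<Sum>i<n. m i * gen_matrix n 1 i j) else 0)"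
        unfolding C_code_def code_gen_def by auto
      have cA: "c j = m j" if "j < n" for j
      proof -
        have "c j = (\<Sum>i<n. m i * (if i = j then 1 else 0))" using that unfolding cdef
          by (simp add: gen_matrix_def)
        also have "\<dots> = (\<Sum>i<n. if i = j then m i else 0)" by (rule sum.cong) auto
        finally have "c j = (\<Sum>i<n. if i = j then m i else 0)" .
        thus ?thesis using that by (simp add: sum.delta)
      qed
      have cB: "c (n + j) = m j + off n m j" if "j < n" for j
      proof -
        have "c (n + j) = (\<Sum>i<n. m i * tridiag n 1 i j)" using that unfolding cdef
          by (auto simp: gen_matrix_def)
        thus ?thesis using tri_sum[OF that, of m 1] by simp
      qed
      have cC: "c j = 0" if "\<not> j < 2*n" for j using that cdef by simp
      define w where "w = off n m"
      have dual: "off n w k = 0" if k: "k < n" for k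
      proof -
        define c' where "c' = (\<lambda>j. if j < 2*n then (\<Sum>i<n. (if i = k then 1 else 0) * gen_matrix n (1::'a) i j) else 0)"
        have "c' \<in> C_code n 1" unfolding C_code_def code_gen_def c'_def
          by (rule CollectI, rule exI[of _ "\<lambda>i. if i = k then 1 else 0"]) (rule refl)
        hence D: "(\<Sum>j<2*n. c j * c' j) = 0" using cin unfolding dual_code_def by blast
        have c'e: "c' j = gen_matrix n 1 k j" if "j < 2*n" for j
        proof -
          have "c' j = (\<Sum>i<n. if i = k then gen_matrix n (1::'a) i j else 0)"
            using that unfolding c'_def by (simp only: if_P) (rule sum.cong, auto)
          thus ?thesis using k by (simp add: sum.delta)
        qed
        have "(\<Sum>j<2*n. c j * c' j) = (\<Sum>j<2*n. c j * gen_matrix n 1 k j)"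
          by (rule sum.cong) (auto simp: c'e)
        with D have "(\<Sum>j<n+n. c j * gen_matrix n 1 k j) = 0"
          by (simp only: mult_2)
        hence S: "(\<Sum>j<n. c j * gen_matrix n 1 k j) + (\<Sum>j<n. c (n+j) * gen_matrix n 1 k (n+j)) = 0"
          by (simp only: sum_split)
        have S1: "(\<Sum>j<n. c j * gen_matrix n 1 k j) = c k"
        proof -
          have "(\<Sum>j<n. c j * gen_matrix n 1 k j) = (\<Sum>j<n. if k = j then c j else 0)"
            by (rule sum.cong) (auto simp: gen_matrix_def)
          thus ?thesis using k by (simp add: sum.delta)
        qed
        have S2: "(\<Sum>j<n. c (n+j) * gen_matrix n 1 k (n+j)) = (\<Sum>j<n. c (n+j) * tridiag n 1 j k)"
          by (rule sum.cong) (auto simp: gen_matrix_def tridiag_def)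
        have S3: "(\<Sum>j<n. c (n+j) * tridiag n 1 j k) = c (n+k) + off n (\<lambda>j. c (n+j)) k"
          using tri_sum[OF k, of "\<lambda>j. c (n+j)" 1] by simp
        have "off n (\<lambda>j. c (n+j)) k = off n (\<lambda>j. m j + w j) k"
        proof -
          have a1: "0 < k \<Longrightarrow> c (n + (k - 1)) = m (k-1) + w (k-1)" using cB[of "k-1"] k w_def by simp
          have a2: "k + 1 < n \<Longrightarrow> c (n + (k + 1)) = m (k+1) + w (k+1)" using cB[of "k+1"] w_def by simp
          show ?thesis unfolding off_def using a1 a2 by simp
        qed
        also have "\<dots> = off n m k + off n w k" unfolding off_def by (simp add: algebra_simps)
        finally have S4: "off n (\<lambda>j. c (n+j)) k = w k + off n w k" by (simp add: w_def)
        have "c k + (c (n+k) + (w k + off n w k)) = 0" using S S1 S2 S3 S4 by simp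
        hence "m k + (m k + w k) + (w k + off n w k) = 0"
          using cA[OF k] cB[OF k] by (simp add: w_def add_ac)
        hence "(m k + m k) + (w k + w k) + off n w k = 0" by (simp add: add_ac)
        thus ?thesis by (simp add: xx)
      qed
      have w0: "w k = 0" if "k < n" for k using kill[OF evn dual that] .
      have m0: "m k = 0" if "k < n" for k using kill[OF evn, of m] w0 that unfolding w_def by blast
      show "c \<in> {\<lambda>_. 0}"
      proof -
        have "c j = 0" for j
        proof (cases "j < n")
          case True thus ?thesis using cA m0 by simp
        next
          case False
          show ?thesis
          proof (cases "j < 2*n")
            case True
            define i where "i = j - n"
            have "j = n + i" "i < n" using False True unfolding i_def by auto
            thus ?thesis using cB m0 w0 w_def by simp
          next
            case False thus ?thesis using cC by simp
          qed
        qed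
        thus ?thesis by auto
      qed
    qed
  qed
  thus ?thesis by blast
qed

end
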